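(* Along every trajectory of the Physarum dynamics, the potential difference $\Delta(t)=p_{s_0}(t)-p_{s_1}(t)$ converges to $L^*$, the length of a shortest $s_0$-$s_1$ path in $G$.
   Context: Let $G=(N,E)$ be a finite connected undirected graph with two distinct vertices $s_0$ (source) and $s_1$ (sink). Each edge $e$ has a fixed length $L_e>0$. Each edge has a time-dependent diameter $D_e(t)$ with $D_e(0)>0$, and resistance $R_e=L_e/D_e$. At each time $t$, the vertex potentials $p_v$ (normalized by $p_{s_1}=0$) are the solution of $\sum_{u\in\delta(v)}(p_v-p_u)/R_{uv}=b_v$ for all $v$, where $\delta(v)$ is the set of neighbours of $v$, $b_{s_0}=1$, $b_{s_1}=-1$, $b_v=0$ otherwise; for an edge $e=\{u,v\}$ with an arbitrarily fixed orientation $(u,v)$ the current is $Q_e=(p_u-p_v)/R_e=D_e(p_u-p_v)/L_e$. The diameters evolve by $\dot D_e(t)=|Q_e(t)|-D_e(t)$ for all $e\in E$ (the "Physarum dynamics"). The length of a path is the sum of $L_e$ over its edges. *)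

theory Defs
  imports "HOL-Analysis.Analysis"
begin

definition undirected_graph :: "'v set \<Rightarrow> 'v set set \<Rightarrow> bool" where
  "undirected_graph N E \<longleftrightarrow> finite N \<and> (\<forall>e\<in>E. \<exists>u v. e = {u, v} \<and> u \<in> N \<and> v \<in> N \<and> u \<noteq> v)"

definition is_path :: "'v set set \<Rightarrow> 'v \<Rightarrow> 'v \<Rightarrow> 'v list \<Rightarrow> bool" where
  "is_path E a b ps \<longleftrightarrow> ps \<noteq> [] \<and> hd ps = a \<and> last ps = b \<and> distinct ps \<and>
     (\<forall>i < length ps - 1. {ps ! i, ps ! Suc i} \<in> E)"

definition connected_graph :: "'v set \<Rightarrow> 'v set set \<Rightarrow> bool" where
  "connected_graph N E \<longleftrightarrow> (\<forall>u\<in>N. \<forall>v\<in>N. \<exists>ps. is_path E u v ps)"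

definition path_length :: "('v set \<Rightarrow> real) \<Rightarrow> 'v list \<Rightarrow> real" where
  "path_length L ps = (\<Sum>i < length ps - 1. L {ps ! i, ps ! Suc i})"

definition shortest_path_length :: "'v set set \<Rightarrow> ('v set \<Rightarrow> real) \<Rightarrow> 'v \<Rightarrow> 'v \<Rightarrow> real" where
  "shortest_path_length E L a b = Min (path_length L ` {ps. is_path E a b ps})"

definition supply_vec :: "'v \<Rightarrow> 'v \<Rightarrow> 'v \<Rightarrow> real" where
  "supply_vec s0 s1 v = (if v = s0 then 1 else if v = s1 then -1 else 0)"

definition kirchhoff_potentials ::
  "'v set \<Rightarrow> 'v set set \<Rightarrow> ('v set \<Rightarrow> real) \<Rightarrow> ('v set \<Rightarrow> real) \<Rightarrow> 'v \<Rightarrow> 'v \<Rightarrow> ('v \<Rightarrow> real) \<Rightarrow> bool" where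
  "kirchhoff_potentials N E L D s0 s1 p \<longleftrightarrow> p s1 = 0 \<and>
     (\<forall>v\<in>N. (\<Sum>u\<in>{u\<in>N. {u, v} \<in> E}. (p v - p u) / (L {u, v} / D {u, v})) = supply_vec s0 s1 v)"

definition physarum_trajectory ::
  "'v set \<Rightarrow> 'v set set \<Rightarrow> ('v set \<Rightarrow> real) \<Rightarrow> 'v \<Rightarrow> 'v \<Rightarrow>
   (real \<Rightarrow> 'v set \<Rightarrow> real) \<Rightarrow> (real \<Rightarrow> 'v \<Rightarrow> real) \<Rightarrow> bool" where
  "physarum_trajectory N E L s0 s1 D p \<longleftrightarrow>
     (\<forall>e\<in>E. D 0 e > 0) \<and>
     (\<forall>t\<ge>0. kirchhoff_potentials N E L (D t) s0 s1 (p t)) \<and>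
     (\<forall>t\<ge>0. \<forall>u v. {u, v} \<in> E \<longrightarrow>
        ((\<lambda>\<tau>. D \<tau> {u, v}) has_real_derivative
           (\<bar>D t {u, v} * (p t u - p t v) / L {u, v}\<bar> - D t {u, v})) (at t within {0..}))"

end

theory Submission
  imports Defs
begin

lemma deriv_at_interior:
  assumes "(g has_real_derivative d) (at \<tau> within {0..})" "\<tau> > 0"
  shows "(g has_real_derivative d) (at \<tau>)"
proof -
  have "(g has_real_derivative d) (at \<tau> within {0<..})"
    by (rule DERIV_subset[OF assms(1)]) (auto simp: subset_eq)
  moreover have "at \<tau> within {0<..} = at \<tau>" using assms(2) by (intro at_within_open) auto
  ultimately show ?thesis by simp
qed

lemma mvt0:
  assumes d: "\<forall>\<tau>\<ge>0. (g has_real_derivative g' \<tau>) (at \<tau> within {0..})"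
    and "0 \<le> a" "a < b"
  shows "\<exists>z. a < z \<and> z < b \<and> g b - g a = (b - a) * g' z"
proof -
  have "\<forall>x\<in>{0..}. continuous (at x within {0..}) g"
    using d DERIV_continuous by (meson atLeast_iff)
  hence "continuous_on {0..} g" by (simp add: continuous_on_eq_continuous_within)
  hence c: "continuous_on {a..b} g" by (rule continuous_on_subset) (use assms in auto)
  have "\<And>x. a < x \<Longrightarrow> x < b \<Longrightarrow> (g has_real_derivative g' x) (at x)"
    using d assms deriv_at_interior by auto
  hence "\<And>x. a < x \<Longrightarrow> x < b \<Longrightarrow> g differentiable at x"
    using real_differentiable_def by blast
  from MVT[OF assms(3) c this] obtain l z where
    z: "a < z" "z < b" "(g has_real_derivative l) (at z)" "g b - g a = (b - a) * l" by blast
  have "(g has_real_derivative g' z) (at z)" using d assms z deriv_at_interior by auto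
  with z(3) have "l = g' z" using DERIV_unique by blast
  with z show ?thesis by blast
qed

lemma incr0:
  assumes d: "\<forall>\<tau>\<ge>0. (g has_real_derivative g' \<tau>) (at \<tau> within {0..})"
    and pos: "\<forall>\<tau>>0. g' \<tau> \<ge> 0" and "0 \<le> a" "a \<le> b"
  shows "g a \<le> g b"
proof (cases "a = b")
  case False
  then have "a < b" using assms by auto
  from mvt0[OF d assms(3) this] obtain z where "a < z" "g b - g a = (b - a) * g' z" by blast
  moreover have "g' z \<ge> 0" using pos \<open>a < z\<close> \<open>0 \<le> a\<close> by auto
  ultimately show ?thesis using \<open>a < b\<close> mult_nonneg_nonneg[of "b - a" "g' z"] by linarith
qed simp

lemma cs_w:
  fixes a b w :: "'a \<Rightarrow> real"
  assumes "\<forall>i\<in>I. w i > 0"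
  shows "(\<Sum>i\<in>I. a i * b i)^2 \<le> (\<Sum>i\<in>I. (a i)^2 * w i) * (\<Sum>i\<in>I. (b i)^2 / w i)"
proof -
  have 1: "(\<Sum>i\<in>I. a i * b i) = (\<Sum>i\<in>I. (a i * sqrt (w i)) * (b i / sqrt (w i)))"
    using assms by (intro sum.cong) auto
  have 2: "(\<Sum>i\<in>I. (a i)^2 * w i) = (\<Sum>i\<in>I. (a i * sqrt (w i))^2)"
    using assms by (intro sum.cong) (auto simp: power_mult_distrib)
  have 3: "(\<Sum>i\<in>I. (b i)^2 / w i) = (\<Sum>i\<in>I. (b i / sqrt (w i))^2)"
    using assms by (intro sum.cong) (auto simp: power_divide)
  show ?thesis unfolding 1 2 3 by (rule Cauchy_Schwarz_ineq_sum)
qed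

locale phys =
  fixes N :: "'v set" and E :: "'v set set" and L :: "'v set \<Rightarrow> real"
    and s0 s1 :: 'v
    and D :: "real \<Rightarrow> 'v set \<Rightarrow> real" and p :: "real \<Rightarrow> 'v \<Rightarrow> real"
  assumes ug: "undirected_graph N E" and cg: "connected_graph N E"
    and s0N: "s0 \<in> N" and s1N: "s1 \<in> N" and s01: "s0 \<noteq> s1"
    and Lpos: "\<forall>e\<in>E. L e > 0"
    and traj: "physarum_trajectory N E L s0 s1 D p"
begin

lemma finN: "finite N" using ug by (simp add: undirected_graph_def)

lemma edge_mem: "{x, y} \<in> E \<Longrightarrow> x \<in> N \<and> y \<in> N \<and> x \<noteq> y"
proof -
  assume "{x, y} \<in> E"
  then obtain u v where "{x, y} = {u, v}" "u \<in> N" "v \<in> N" "u \<noteq> v"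
    using ug unfolding undirected_graph_def by blast
  then show ?thesis by (metis doubleton_eq_iff insert_absorb2 insert_iff singleton_insert_inj_eq)
qed

lemma edge_ex: "e \<in> E \<Longrightarrow> \<exists>u v. e = {u, v}"
  using ug unfolding undirected_graph_def by blast

lemma Lp: "{x, y} \<in> E \<Longrightarrow> L {x, y} > 0" using Lpos by auto

lemma D0: "e \<in> E \<Longrightarrow> D 0 e > 0" using traj by (simp add: physarum_trajectory_def)

lemma kirch: "t \<ge> 0 \<Longrightarrow> kirchhoff_potentials N E L (D t) s0 s1 (p t)"
  using traj by (simp add: physarum_trajectory_def)

lemma Dderiv: "t \<ge> 0 \<Longrightarrow> {u, v} \<in> E \<Longrightarrow>
  ((\<lambda>\<tau>. D \<tau> {u, v}) has_real_derivative
           (\<bar>D t {u, v} * (p t u - p t v) / L {u, v}\<bar> - D t {u, v})) (at t within {0..})"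
  using traj by (simp add: physarum_trajectory_def)

lemma Dlow: assumes "{u, v} \<in> E" "0 \<le> s" "s \<le> t"
  shows "D t {u, v} \<ge> D s {u, v} * exp (-(t - s))"
proof -
  let ?y = "\<lambda>\<tau>. exp \<tau> * D \<tau> {u, v}"
  let ?y' = "\<lambda>\<tau>. exp \<tau> * D \<tau> {u, v} + (\<bar>D \<tau> {u, v} * (p \<tau> u - p \<tau> v) / L {u, v}\<bar> - D \<tau> {u, v}) * exp \<tau>"
  have d: "\<forall>\<tau>\<ge>0. (?y has_real_derivative ?y' \<tau>) (at \<tau> within {0..})"
  proof (intro allI impI)
    fix \<tau> :: real assume "\<tau> \<ge> 0"
    show "(?y has_real_derivative ?y' \<tau>) (at \<tau> within {0..})"
      by (rule DERIV_mult[OF DERIV_exp[THEN DERIV_subset] Dderiv[OF \<open>\<tau> \<ge> 0\<close> assms(1)]]) simp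
  qed
  have "\<forall>\<tau>>0. ?y' \<tau> \<ge> 0" by (auto simp: algebra_simps)
  from incr0[OF d this assms(2,3)] have "exp s * D s {u, v} \<le> exp t * D t {u, v}" .
  hence "exp (-t) * (exp s * D s {u, v}) \<le> exp (-t) * (exp t * D t {u, v})" by simp
  thus ?thesis by (simp add: mult.assoc[symmetric] exp_add[symmetric] mult.commute)
qed

lemma Dpos: assumes "{u, v} \<in> E" "t \<ge> 0" shows "D t {u, v} > 0"
proof -
  have "D t {u, v} \<ge> D 0 {u, v} * exp (-(t - 0))" using Dlow[OF assms(1), of 0 t] assms by linarith
  moreover have "D 0 {u, v} * exp (-(t - 0)) > 0" using D0[OF assms(1)] by simp
  ultimately show ?thesis by linarith
qed

lemma Dpos': "e \<in> E \<Longrightarrow> t \<ge> 0 \<Longrightarrow> D t e > 0" using Dpos edge_ex by blast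

definition A :: "('v \<times> 'v) set" where "A = (SIGMA v:N. {u\<in>N. {u, v} \<in> E})"

definition ed :: "'v \<times> 'v \<Rightarrow> 'v set" where "ed x = {fst x, snd x}"

lemma A_iff: "x \<in> A \<longleftrightarrow> ed x \<in> E"
  unfolding A_def ed_def by (cases x) (auto simp: insert_commute dest: edge_mem)

lemma finA: "finite A" unfolding A_def using finN by auto

lemma ed_swap[simp]: "ed (prod.swap x) = ed x" by (cases x) (auto simp: ed_def insert_commute)

lemma sum_swap: "(\<Sum>x\<in>A. g x) = (\<Sum>x\<in>A. g (prod.swap x))"
  by (rule sum.reindex_bij_witness[of _ prod.swap prod.swap]) (auto simp: A_iff)

lemma sum_split: "(\<Sum>x\<in>A. g x) = (\<Sum>v\<in>N. \<Sum>u\<in>{u\<in>N. {u, v} \<in> E}. g (v, u))"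
  unfolding A_def using finN by (subst sum.Sigma) auto


lemma sum_split_at: fixes f :: "nat \<Rightarrow> real" shows "(\<Sum>i<k + m. f i) = (\<Sum>i<k. f i) + (\<Sum>i<m. f (k + i))"
  by (induction m) auto

lemma path_setN: assumes "is_path E a b ps" "b \<in> N" shows "set ps \<subseteq> N"
proof
  fix x assume "x \<in> set ps"
  then obtain i where i: "i < length ps" "x = ps ! i" by (auto simp: in_set_conv_nth)
  show "x \<in> N"
  proof (cases "i < length ps - 1")
    case True
    then have "{ps ! i, ps ! Suc i} \<in> E" using assms(1) by (auto simp: is_path_def)
    then show ?thesis using edge_mem i by auto
  next
    case False
    then have "i = length ps - 1" using i by auto
    then have "x = last ps" using i assms(1) by (auto simp: is_path_def last_conv_nth)
    then show ?thesis using assms by (auto simp: is_path_def)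
  qed
qed

lemma finite_paths: assumes "b \<in> N" shows "finite {ps. is_path E a b ps}"
proof (rule finite_subset)
  show "{ps. is_path E a b ps} \<subseteq> {xs. set xs \<subseteq> N \<and> length xs \<le> card N}"
  proof
    fix ps assume "ps \<in> {ps. is_path E a b ps}"
    hence *: "is_path E a b ps" by simp
    have s: "set ps \<subseteq> N" using path_setN[OF * assms] .
    hence "card (set ps) \<le> card N" using finN by (intro card_mono) auto
    hence "length ps \<le> card N" using * by (auto simp: is_path_def distinct_card)
    thus "ps \<in> {xs. set xs \<subseteq> N \<and> length xs \<le> card N}" using s by simp
  qed
  show "finite {xs. set xs \<subseteq> N \<and> length xs \<le> card N}" using finN finite_lists_length_le by blast
qed

lemma paths_ne: "a \<in> N \<Longrightarrow> b \<in> N \<Longrightarrow> {ps. is_path E a b ps} \<noteq> {}"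
  using cg by (auto simp: connected_graph_def)

lemma spl_le: "is_path E a b ps \<Longrightarrow> b \<in> N \<Longrightarrow> shortest_path_length E L a b \<le> path_length L ps"
  unfolding shortest_path_length_def using finite_paths by (intro Min_le) auto

lemma spl_ex: assumes "a \<in> N" "b \<in> N"
  shows "\<exists>ps. is_path E a b ps \<and> path_length L ps = shortest_path_length E L a b"
proof -
  have "shortest_path_length E L a b \<in> path_length L ` {ps. is_path E a b ps}"
    unfolding shortest_path_length_def using finite_paths[OF assms(2)] paths_ne[OF assms]
    by (intro Min_in) auto
  thus ?thesis by auto
qed

lemma path_edge: "is_path E a b ps \<Longrightarrow> i < length ps - 1 \<Longrightarrow> {ps ! i, ps ! Suc i} \<in> E"
  by (auto simp: is_path_def)

lemma path_length_nonneg: assumes "is_path E a b ps" shows "path_length L ps \<ge> 0"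
  unfolding path_length_def using Lp path_edge[OF assms] by (intro sum_nonneg) (auto intro: less_imp_le)

lemma path_cons: assumes "is_path E v b ps" "{u, v} \<in> E" "u \<notin> set ps"
  shows "is_path E u b (u # ps) \<and> path_length L (u # ps) = L {u, v} + path_length L ps"
proof -
  have ne: "ps \<noteq> []" and hd: "ps ! 0 = v" using assms(1) by (auto simp: is_path_def hd_conv_nth)
  then obtain n where n: "length ps = Suc n" by (cases ps) auto
  have "is_path E u b (u # ps)"
    unfolding is_path_def
  proof (intro conjI allI impI)
    fix i assume "i < length (u # ps) - 1"
    then show "{(u # ps) ! i, (u # ps) ! Suc i} \<in> E"
      using assms(1,2) hd by (cases i) (auto simp: is_path_def)
  qed (use assms ne in \<open>auto simp: is_path_def\<close>)
  moreover have "path_length L (u # ps) = L {u, v} + path_length L ps"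
  proof -
    have "path_length L (u#ps) = (\<Sum>i<Suc n. L{(u#ps)!i, (u#ps)!Suc i})" by (simp add: path_length_def n)
    also have "... = L{(u#ps)!0, (u#ps)!Suc 0} + (\<Sum>i<n. L{(u#ps)!Suc i, (u#ps)!Suc(Suc i)})"
      by (rule sum.lessThan_Suc_shift)
    also have "... = L{u,v} + path_length L ps" using hd n by (simp add: path_length_def)
    finally show ?thesis .
  qed
  ultimately show ?thesis by blast
qed

lemma path_drop: assumes "is_path E a b ps" "k < length ps"
  shows "is_path E (ps ! k) b (drop k ps) \<and> path_length L (drop k ps) \<le> path_length L ps"
proof -
  have ip: "is_path E (ps ! k) b (drop k ps)"
    using assms by (auto simp: is_path_def hd_drop_conv_nth)
  define n where "n = length ps - 1"
  have kn: "n = k + (n - k)" using assms n_def by auto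
  have "path_length L ps = (\<Sum>i<k. L {ps ! i, ps ! Suc i}) + (\<Sum>i<n-k. L {ps ! (k+i), ps ! Suc (k+i)})"
    unfolding path_length_def n_def[symmetric] by (subst kn, subst sum_split_at) simp
  moreover have "path_length L (drop k ps) = (\<Sum>i<n-k. L {ps ! (k+i), ps ! Suc (k+i)})"
    unfolding path_length_def n_def using assms by (intro sum.cong) auto
  moreover have "(\<Sum>i<k. L {ps ! i, ps ! Suc i}) \<ge> 0"
    using Lp path_edge[OF assms(1)] assms(2) n_def by (intro sum_nonneg) (auto intro: less_imp_le)
  ultimately show ?thesis using ip by linarith
qed

definition pi :: "'v \<Rightarrow> real" where "pi v = shortest_path_length E L v s1"

lemma pi_s1: "pi s1 = 0"
proof -
  have "is_path E s1 s1 [s1]" by (simp add: is_path_def)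
  hence "pi s1 \<le> 0" using spl_le[of s1 s1 "[s1]"] s1N by (simp add: pi_def path_length_def)
  moreover obtain ps where "is_path E s1 s1 ps" "path_length L ps = pi s1"
    using spl_ex[OF s1N s1N] by (auto simp: pi_def)
  ultimately show ?thesis using path_length_nonneg by force
qed

lemma pi_edge: assumes "{u, v} \<in> E" shows "pi u \<le> L {u, v} + pi v"
proof -
  have uv: "u \<in> N" "v \<in> N" using edge_mem[OF assms] by auto
  obtain ps where ps: "is_path E v s1 ps" "path_length L ps = pi v"
    using spl_ex[OF uv(2) s1N] by (auto simp: pi_def)
  show ?thesis
  proof (cases "u \<in> set ps")
    case False
    from path_cons[OF ps(1) assms False] have "pi u \<le> path_length L (u # ps)"
      unfolding pi_def using spl_le s1N by blast
    then show ?thesis using path_cons[OF ps(1) assms False] ps(2) by simp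
  next
    case True
    then obtain k where k: "k < length ps" "ps ! k = u" by (auto simp: in_set_conv_nth)
    from path_drop[OF ps(1) k(1)] k have "is_path E u s1 (drop k ps)"
      "path_length L (drop k ps) \<le> path_length L ps" by auto
    then have "pi u \<le> pi v" using spl_le[of u s1 "drop k ps"] s1N ps(2) unfolding pi_def by linarith
    then show ?thesis using Lp[OF assms] by linarith
  qed
qed

lemma pi_abs: assumes "{u, v} \<in> E" shows "\<bar>pi u - pi v\<bar> \<le> L {u, v}"
  using pi_edge[OF assms] pi_edge[of v u] assms by (auto simp: insert_commute)


definition dp :: "real \<Rightarrow> 'v \<times> 'v \<Rightarrow> real" where "dp t x = p t (fst x) - p t (snd x)"
definition Q :: "real \<Rightarrow> 'v \<times> 'v \<Rightarrow> real" where "Q t x = D t (ed x) * dp t x / L (ed x)"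
definition Dl :: "real \<Rightarrow> real" where "Dl t = p t s0 - p t s1"
definition F :: "real \<Rightarrow> real" where "F t = (\<Sum>x\<in>A. D t (ed x) * \<bar>dp t x\<bar>)"
definition C2 :: "real \<Rightarrow> real" where "C2 t = (\<Sum>x\<in>A. L (ed x) * D t (ed x))"

definition isflow :: "('v \<times> 'v \<Rightarrow> real) \<Rightarrow> bool" where
  "isflow f \<longleftrightarrow> (\<forall>x\<in>A. f (prod.swap x) = - f x) \<and>
     (\<forall>v\<in>N. (\<Sum>u\<in>{u\<in>N. {u, v} \<in> E}. f (v, u)) = supply_vec s0 s1 v)"

lemma supply_sum: "(\<Sum>v\<in>N. g v * supply_vec s0 s1 v) = g s0 - g s1"
proof -
  have "(\<Sum>v\<in>N. g v * supply_vec s0 s1 v) =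
    (\<Sum>v\<in>N. (if v = s0 then g v else 0)) - (\<Sum>v\<in>N. (if v = s1 then g v else 0))"
    unfolding sum_subtractf[symmetric] using s01 by (intro sum.cong) (auto simp: supply_vec_def)
  also have "\<dots> = g s0 - g s1" using finN s0N s1N by (simp add: sum.delta)
  finally show ?thesis .
qed

lemma div_identity: assumes "isflow f"
  shows "(\<Sum>x\<in>A. f x * (g (fst x) - g (snd x))) = 2 * (g s0 - g s1)"
proof -
  have S1: "(\<Sum>x\<in>A. f x * g (fst x)) = g s0 - g s1"
  proof -
    have "(\<Sum>x\<in>A. f x * g (fst x)) = (\<Sum>v\<in>N. g v * (\<Sum>u\<in>{u\<in>N. {u, v} \<in> E}. f (v, u)))"
      by (subst sum_split) (simp add: sum_distrib_left mult.commute)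
    also have "\<dots> = (\<Sum>v\<in>N. g v * supply_vec s0 s1 v)"
      using assms by (intro sum.cong) (auto simp: isflow_def)
    finally show ?thesis using supply_sum by simp
  qed
  have S2: "(\<Sum>x\<in>A. f x * g (snd x)) = - (\<Sum>x\<in>A. f x * g (fst x))"
  proof -
    have "(\<Sum>x\<in>A. f x * g (snd x)) = (\<Sum>x\<in>A. f (prod.swap x) * g (fst x))"
      by (subst sum_swap) simp
    also have "\<dots> = (\<Sum>x\<in>A. - (f x * g (fst x)))"
      using assms by (intro sum.cong) (auto simp: isflow_def)
    finally show ?thesis by (simp add: sum_negf)
  qed
  have "(\<Sum>x\<in>A. f x * (g (fst x) - g (snd x))) = (\<Sum>x\<in>A. f x * g (fst x)) - (\<Sum>x\<in>A. f x * g (snd x))"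
    by (simp add: algebra_simps sum_subtractf)
  then show ?thesis using S1 S2 by simp
qed

lemma Q_flow: assumes "t \<ge> 0" shows "isflow (Q t)"
  unfolding isflow_def
proof (intro conjI ballI)
  fix x assume "x \<in> A"
  show "Q t (prod.swap x) = - Q t x"
    unfolding Q_def dp_def by (cases x) (simp add: ed_def insert_commute minus_divide_left right_diff_distrib)
next
  fix v assume v: "v \<in> N"
  have "(\<Sum>u\<in>{u\<in>N. {u, v} \<in> E}. Q t (v, u)) =
     (\<Sum>u\<in>{u\<in>N. {u, v} \<in> E}. (p t v - p t u) / (L {u, v} / D t {u, v}))"
    unfolding Q_def dp_def ed_def by (intro sum.cong) (auto simp: insert_commute)
  also have "\<dots> = supply_vec s0 s1 v" using kirch[OF assms] v by (simp add: kirchhoff_potentials_def)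
  finally show "(\<Sum>u\<in>{u\<in>N. {u, v} \<in> E}. Q t (v, u)) = supply_vec s0 s1 v" .
qed

lemma DpA: "x \<in> A \<Longrightarrow> t \<ge> 0 \<Longrightarrow> D t (ed x) > 0"
  using Dpos' A_iff by blast
lemma LpA: "x \<in> A \<Longrightarrow> L (ed x) > 0"
  using Lpos A_iff by blast

lemma energy: assumes "t \<ge> 0" shows "(\<Sum>x\<in>A. D t (ed x) * (dp t x)^2 / L (ed x)) = 2 * Dl t"
proof -
  have "(\<Sum>x\<in>A. D t (ed x) * (dp t x)^2 / L (ed x)) = (\<Sum>x\<in>A. Q t x * (p t (fst x) - p t (snd x)))"
    unfolding Q_def dp_def by (intro sum.cong) (auto simp: power2_eq_square)
  also have "\<dots> = 2 * Dl t" using div_identity[OF Q_flow[OF assms]] by (simp add: Dl_def)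
  finally show ?thesis .
qed

lemma Dl_nonneg: assumes "t \<ge> 0" shows "Dl t \<ge> 0"
proof -
  have "(\<Sum>x\<in>A. D t (ed x) * (dp t x)^2 / L (ed x)) \<ge> 0"
  proof (intro sum_nonneg)
    fix x assume x: "x \<in> A"
    have "L (ed x) > 0" "D t (ed x) > 0" using DpA[OF x assms(1)] LpA[OF x] by auto
    thus "D t (ed x) * (dp t x)^2 / L (ed x) \<ge> 0" by simp
  qed
  thus ?thesis using energy[OF assms] by simp
qed

lemma thomson: assumes "t \<ge> 0" "isflow f"
  shows "2 * Dl t \<le> (\<Sum>x\<in>A. L (ed x) * (f x)^2 / D t (ed x))"
proof -
  let ?T = "(\<Sum>x\<in>A. L (ed x) * (f x)^2 / D t (ed x))"
  have e: "2 * Dl t = (\<Sum>x\<in>A. f x * dp t x)"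
    using div_identity[OF assms(2), of "p t"] by (simp add: Dl_def dp_def)
  have w: "\<forall>x\<in>A. L (ed x) / D t (ed x) > 0" using DpA LpA assms by auto
  have "(\<Sum>x\<in>A. f x * dp t x)^2 \<le> (\<Sum>x\<in>A. (f x)^2 * (L (ed x) / D t (ed x))) *
          (\<Sum>x\<in>A. (dp t x)^2 / (L (ed x) / D t (ed x)))"
    by (rule cs_w[OF w])
  also have "(\<Sum>x\<in>A. (f x)^2 * (L (ed x) / D t (ed x))) = ?T" by (intro sum.cong) auto
  also have "(\<Sum>x\<in>A. (dp t x)^2 / (L (ed x) / D t (ed x))) = 2 * Dl t"
    using energy[OF assms(1)] by (simp add: mult.commute)
  finally have "(2 * Dl t)^2 \<le> ?T * (2 * Dl t)" using e by simp
  moreover have "?T \<ge> 0"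
  proof (intro sum_nonneg)
    fix x assume x: "x \<in> A"
    have "L (ed x) > 0" "D t (ed x) > 0" using DpA[OF x assms(1)] LpA[OF x] by auto
    thus "L (ed x) * (f x)^2 / D t (ed x) \<ge> 0" by simp
  qed
  moreover have "Dl t \<ge> 0" using Dl_nonneg assms by simp
  ultimately show ?thesis by (cases "Dl t = 0") (auto simp: power2_eq_square)
qed

lemma Lstar: "shortest_path_length E L s0 s1 = pi s0" by (simp add: pi_def)

lemma F_lower: assumes "t \<ge> 0" shows "2 * pi s0 \<le> F t"
proof -
  have "2 * pi s0 = (\<Sum>x\<in>A. Q t x * (pi (fst x) - pi (snd x)))"
    using div_identity[OF Q_flow[OF assms], of pi] pi_s1 by simp
  also have "\<dots> \<le> F t" unfolding F_def
  proof (rule sum_mono)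
    fix x assume x: "x \<in> A"
    have "Q t x * (pi (fst x) - pi (snd x)) \<le> \<bar>Q t x\<bar> * \<bar>pi (fst x) - pi (snd x)\<bar>"
      by (metis abs_ge_self abs_mult)
    also have "\<dots> \<le> \<bar>Q t x\<bar> * L (ed x)"
      using pi_abs[of "fst x" "snd x"] x A_iff by (intro mult_left_mono) (auto simp: ed_def)
    also have "\<dots> = D t (ed x) * \<bar>dp t x\<bar>"
      using DpA[OF x assms] LpA[OF x] by (simp add: Q_def abs_mult)
    finally show "Q t x * (pi (fst x) - pi (snd x)) \<le> D t (ed x) * \<bar>dp t x\<bar>" .
  qed
  finally show ?thesis .
qed

lemma F_upper: assumes "t \<ge> 0" shows "(F t)^2 \<le> 2 * Dl t * C2 t"
proof -
  have w: "\<forall>x\<in>A. D t (ed x) / L (ed x) > 0" using DpA LpA assms by auto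
  have "(F t)^2 = (\<Sum>x\<in>A. \<bar>dp t x\<bar> * D t (ed x))^2" by (simp add: F_def mult.commute)
  also have "\<dots> \<le> (\<Sum>x\<in>A. \<bar>dp t x\<bar>^2 * (D t (ed x) / L (ed x))) * (\<Sum>x\<in>A. (D t (ed x))^2 / (D t (ed x) / L (ed x)))"
    by (rule cs_w[OF w])
  also have "(\<Sum>x\<in>A. \<bar>dp t x\<bar>^2 * (D t (ed x) / L (ed x))) = 2 * Dl t"
    using energy[OF assms] by (simp add: mult.commute)
  also have "(\<Sum>x\<in>A. (D t (ed x))^2 / (D t (ed x) / L (ed x))) = C2 t"
    unfolding C2_def using w by (intro sum.cong) (auto simp: power2_eq_square)
  finally show ?thesis .
qed

lemma C2_deriv: assumes "t \<ge> 0" shows "(C2 has_real_derivative (F t - C2 t)) (at t within {0..})"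
proof -
  have "(C2 has_real_derivative (\<Sum>x\<in>A. L (ed x) * (\<bar>D t (ed x) * dp t x / L (ed x)\<bar> - D t (ed x)))) (at t within {0..})"
    unfolding C2_def
  proof (rule DERIV_sum)
    fix x assume x: "x \<in> A"
    obtain a b where xab: "x = (a, b)" by (cases x)
    have "{a, b} \<in> E" using x xab A_iff ed_def by auto
    from DERIV_cmult[OF Dderiv[OF assms this], of "L {a, b}"]
    show "((\<lambda>\<tau>. L (ed x) * D \<tau> (ed x)) has_real_derivative L (ed x) * (\<bar>D t (ed x) * dp t x / L (ed x)\<bar> - D t (ed x))) (at t within {0..})"
      by (simp add: xab ed_def dp_def)
  qed
  also have "(\<Sum>x\<in>A. L (ed x) * (\<bar>D t (ed x) * dp t x / L (ed x)\<bar> - D t (ed x))) = F t - C2 t"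
    unfolding F_def C2_def sum_subtractf[symmetric]
  proof (intro sum.cong refl)
    fix x assume x: "x \<in> A"
    have "L (ed x) > 0" "D t (ed x) > 0" using DpA[OF x assms(1)] LpA[OF x] by auto
    thus "L (ed x) * (\<bar>D t (ed x) * dp t x / L (ed x)\<bar> - D t (ed x)) = D t (ed x) * \<bar>dp t x\<bar> - L (ed x) * D t (ed x)"
      by (simp add: abs_mult right_diff_distrib)
  qed
  finally show ?thesis .
qed

end



context phys begin

definition sp :: "'v list" where "sp = (SOME ps. is_path E s0 s1 ps \<and> path_length L ps = pi s0)"

lemma sp: "is_path E s0 s1 sp" "path_length L sp = pi s0"
proof -
  have "\<exists>ps. is_path E s0 s1 ps \<and> path_length L ps = pi s0"
    using spl_ex[OF s0N s1N] by (simp add: pi_def)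
  from someI_ex[OF this] show "is_path E s0 s1 sp" "path_length L sp = pi s0" by (auto simp: sp_def)
qed

definition m :: nat where "m = length sp - 1"
definition ee :: "nat \<Rightarrow> 'v set" where "ee i = {sp ! i, sp ! Suc i}"
definition fw :: "nat \<Rightarrow> 'v \<times> 'v" where "fw i = (sp ! i, sp ! Suc i)"
definition bw :: "nat \<Rightarrow> 'v \<times> 'v" where "bw i = (sp ! Suc i, sp ! i)"

lemma ee_E: "i < m \<Longrightarrow> ee i \<in> E" using path_edge[OF sp(1)] by (simp add: ee_def m_def)
lemma ed_fw: "ed (fw i) = ee i" by (simp add: ed_def fw_def ee_def)
lemma ed_bw: "ed (bw i) = ee i" by (simp add: ed_def bw_def ee_def insert_commute)

lemma pi_s0_nonneg: "pi s0 \<ge> 0" using path_length_nonneg[OF sp(1)] sp(2) by simp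

lemma pathlen_sp: "(\<Sum>i<m. L (ee i)) = pi s0"
  using sp(2) by (simp add: path_length_def m_def ee_def)

definition W :: "real \<Rightarrow> real" where "W t = (\<Sum>i<m. L (ee i) * ln (D t (ee i)))"
definition Wd :: "real \<Rightarrow> real" where "Wd t = (\<Sum>i<m. \<bar>p t (sp ! i) - p t (sp ! Suc i)\<bar> - L (ee i))"

lemma W_deriv: assumes "t \<ge> 0" shows "(W has_real_derivative Wd t) (at t within {0..})"
  unfolding W_def Wd_def
proof (rule DERIV_sum)
  fix i assume "i \<in> {..<m}"
  then have e: "ee i \<in> E" using ee_E by simp
  have Dp: "D t (ee i) > 0" using Dpos' e assms by blast
  have Lp': "L (ee i) > 0" using Lpos e by blast
  have d1: "((\<lambda>\<tau>. D \<tau> (ee i)) has_real_derivative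
           (\<bar>D t (ee i) * (p t (sp ! i) - p t (sp ! Suc i)) / L (ee i)\<bar> - D t (ee i))) (at t within {0..})"
    using Dderiv[OF assms, of "sp ! i" "sp ! Suc i"] e by (simp add: ee_def)
  have d2: "((\<lambda>\<tau>. ln (D \<tau> (ee i))) has_real_derivative
      1 / D t (ee i) * (\<bar>D t (ee i) * (p t (sp ! i) - p t (sp ! Suc i)) / L (ee i)\<bar> - D t (ee i))) (at t within {0..})"
    by (rule DERIV_chain2[OF DERIV_ln_divide[OF Dp] d1])
  have eq: "L (ee i) * (1 / D t (ee i) * (\<bar>D t (ee i) * (p t (sp ! i) - p t (sp ! Suc i)) / L (ee i)\<bar> - D t (ee i)))
     = \<bar>p t (sp ! i) - p t (sp ! Suc i)\<bar> - L (ee i)"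
  proof -
    let ?a = "p t (sp ! i) - p t (sp ! Suc i)"
    have "\<bar>D t (ee i) * ?a / L (ee i)\<bar> = D t (ee i) * \<bar>?a\<bar> / L (ee i)" using Dp Lp' by (simp add: abs_mult)
    then show ?thesis using Dp Lp' by (simp add: right_diff_distrib)
  qed
  show "((\<lambda>\<tau>. L (ee i) * ln (D \<tau> (ee i))) has_real_derivative \<bar>p t (sp ! i) - p t (sp ! Suc i)\<bar> - L (ee i)) (at t within {0..})"
    using DERIV_cmult[OF d2, of "L (ee i)"] eq by simp
qed

lemma Wd_ge: "Wd t \<ge> Dl t - pi s0"
proof -
  have "(\<Sum>i<m. p t (sp ! i) - p t (sp ! Suc i)) = p t (sp ! 0) - p t (sp ! m)"
    using sum_lessThan_telescope[of "\<lambda>i. - p t (sp ! i)" m] by simp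
  also have "sp ! 0 = s0" using sp(1) by (auto simp: is_path_def hd_conv_nth)
  also have "sp ! m = s1" using sp(1) by (auto simp: is_path_def m_def last_conv_nth)
  finally have tel: "(\<Sum>i<m. p t (sp ! i) - p t (sp ! Suc i)) = Dl t" by (simp add: Dl_def)
  have "(\<Sum>i<m. p t (sp ! i) - p t (sp ! Suc i)) \<le> (\<Sum>i<m. \<bar>p t (sp ! i) - p t (sp ! Suc i)\<bar>)"
    by (rule sum_mono) (rule abs_ge_self)
  moreover have "Wd t = (\<Sum>i<m. \<bar>p t (sp ! i) - p t (sp ! Suc i)\<bar>) - pi s0"
    unfolding Wd_def sum_subtractf pathlen_sp ..
  ultimately show ?thesis using tel by linarith
qed

lemma fw_A: "i < m \<Longrightarrow> fw i \<in> A" using ee_E ed_fw A_iff by simp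
lemma bw_A: "i < m \<Longrightarrow> bw i \<in> A" using ee_E ed_bw A_iff by simp

lemma two_path_le: fixes g :: "'v \<times> 'v \<Rightarrow> real" assumes "\<forall>x\<in>A. g x \<ge> 0"
  shows "(\<Sum>i<m. g (fw i)) + (\<Sum>i<m. g (bw i)) \<le> (\<Sum>x\<in>A. g x)"
proof -
  have dist: "distinct sp" using sp(1) by (simp add: is_path_def)
  have len: "Suc i < length sp" if "i < m" for i using that by (simp add: m_def)
  have inj1: "inj_on fw {..<m}"
    unfolding inj_on_def fw_def using dist len by (auto simp: nth_eq_iff_index_eq)
  have inj2: "inj_on bw {..<m}"
    unfolding inj_on_def bw_def using dist len by (auto simp: nth_eq_iff_index_eq)
  have ne: "fw i \<noteq> bw j" if ij: "i < m" "j < m" for i j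
  proof
    assume "fw i = bw j"
    then have "sp ! i = sp ! Suc j" "sp ! Suc i = sp ! j" by (auto simp: fw_def bw_def)
    moreover have "i < length sp" "Suc j < length sp" "Suc i < length sp" "j < length sp"
      using len[OF ij(1)] len[OF ij(2)] by auto
    ultimately have "i = Suc j" "Suc i = j" using nth_eq_iff_index_eq[OF dist] by metis+
    then show False by simp
  qed
  have disj: "fw ` {..<m} \<inter> bw ` {..<m} = {}" using ne by fastforce
  have "(\<Sum>i<m. g (fw i)) + (\<Sum>i<m. g (bw i)) = sum g (fw ` {..<m}) + sum g (bw ` {..<m})"
    using sum.reindex[OF inj1, of g] sum.reindex[OF inj2, of g] by simp
  also have "\<dots> = sum g (fw ` {..<m} \<union> bw ` {..<m})"
    by (rule sum.union_disjoint[symmetric]) (use disj in auto)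
  also have "\<dots> \<le> sum g A"
    using fw_A bw_A assms by (intro sum_mono2 finA) auto
  finally show ?thesis .
qed

lemma W_upper: assumes "t \<ge> 0" shows "2 * W t \<le> C2 t - 2 * pi s0"
proof -
  have "W t \<le> (\<Sum>i<m. L (ee i) * (D t (ee i) - 1))"
    unfolding W_def
  proof (rule sum_mono)
    fix i assume "i \<in> {..<m}"
    then have e: "ee i \<in> E" using ee_E by simp
    have "D t (ee i) > 0" using Dpos' e assms by blast
    then have "ln (D t (ee i)) \<le> D t (ee i) - 1" by (rule ln_le_minus_one)
    then show "L (ee i) * ln (D t (ee i)) \<le> L (ee i) * (D t (ee i) - 1)"
      using Lpos e by (intro mult_left_mono) auto
  qed
  also have "\<dots> = (\<Sum>i<m. L (ee i) * D t (ee i)) - pi s0"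
    by (simp add: right_diff_distrib sum_subtractf pathlen_sp)
  finally have 1: "W t \<le> (\<Sum>i<m. L (ee i) * D t (ee i)) - pi s0" .
  have "(\<Sum>i<m. L (ed (fw i)) * D t (ed (fw i))) + (\<Sum>i<m. L (ed (bw i)) * D t (ed (bw i))) \<le> C2 t"
    unfolding C2_def using DpA LpA assms
    by (intro two_path_le) (auto intro!: mult_nonneg_nonneg less_imp_le)
  then have "2 * (\<Sum>i<m. L (ee i) * D t (ee i)) \<le> C2 t" by (simp add: ed_fw ed_bw)
  with 1 show ?thesis by linarith
qed

definition Phi :: "real \<Rightarrow> real" where "Phi t = C2 t / 2 - W t"
definition Phid :: "real \<Rightarrow> real" where "Phid t = (F t - C2 t) / 2 - Wd t"

lemma Phi_deriv: "t \<ge> 0 \<Longrightarrow> (Phi has_real_derivative Phid t) (at t within {0..})"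
  unfolding Phi_def Phid_def
  by (intro DERIV_diff DERIV_cdivide C2_deriv W_deriv) auto

lemma Phi_lower: "t \<ge> 0 \<Longrightarrow> Phi t \<ge> pi s0"
  using W_upper unfolding Phi_def by force

lemma C2_nonneg: "t \<ge> 0 \<Longrightarrow> C2 t \<ge> 0"
  unfolding C2_def using DpA LpA by (intro sum_nonneg) (auto intro!: mult_nonneg_nonneg less_imp_le)

lemma m_pos: "m > 0"
proof -
  have "length sp \<noteq> 1"
  proof
    assume "length sp = 1"
    then have "hd sp = last sp" by (cases sp) auto
    then show False using sp(1) s01 unfolding is_path_def by metis
  qed
  moreover have "sp \<noteq> []" using sp(1) by (simp add: is_path_def)
  ultimately show ?thesis by (cases sp) (auto simp: m_def)
qed

lemma C2_pos: assumes "t \<ge> 0" shows "C2 t > 0"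
proof -
  have x: "fw 0 \<in> A" using fw_A m_pos by simp
  have "C2 t = L (ed (fw 0)) * D t (ed (fw 0)) + (\<Sum>x\<in>A - {fw 0}. L (ed x) * D t (ed x))"
    unfolding C2_def using finA x by (simp add: sum.remove)
  moreover have "(\<Sum>x\<in>A - {fw 0}. L (ed x) * D t (ed x)) \<ge> 0"
    using DpA LpA assms by (intro sum_nonneg) (auto intro!: mult_nonneg_nonneg less_imp_le)
  moreover have "L (ed (fw 0)) * D t (ed (fw 0)) > 0" using DpA[OF x assms] LpA[OF x] by simp
  ultimately show ?thesis by linarith
qed

lemma key_bounds: assumes "t \<ge> 0"
  shows "Phid t \<le> pi s0 - (Dl t + C2 t / 2) / 2" "Phid t \<le> 0" "(pi s0)^2 \<le> Dl t * (C2 t / 2)"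
proof -
  define c where "c = C2 t / 2"
  define Fh where "Fh = F t / 2"
  have Dn: "Dl t \<ge> 0" using Dl_nonneg assms .
  have cn: "c \<ge> 0" using C2_nonneg[OF assms] unfolding c_def by simp
  have 1: "Fh^2 \<le> Dl t * c" using F_upper[OF assms] by (simp add: Fh_def c_def power_divide)
  have 2: "pi s0 \<le> Fh" using F_lower[OF assms] by (simp add: Fh_def)
  have sq: "((Dl t + c) / 2)^2 = Dl t * c + ((Dl t - c) / 2)^2" by (simp add: power2_eq_square field_simps)
  have "Dl t * c \<le> ((Dl t + c) / 2)^2" unfolding sq by simp
  with 1 have "Fh^2 \<le> ((Dl t + c) / 2)^2" by (rule order_trans)
  moreover have "0 \<le> (Dl t + c) / 2" using Dn cn by simp
  ultimately have 3: "Fh \<le> (Dl t + c) / 2" by (rule power2_le_imp_le)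
  have 4: "Phid t \<le> Fh - c - Dl t + pi s0" using Wd_ge[of t] unfolding Phid_def Fh_def c_def by (simp add: diff_divide_distrib)
  show "Phid t \<le> pi s0 - (Dl t + C2 t / 2) / 2" using 3 4 unfolding c_def by argo
  show "Phid t \<le> 0" using 2 3 4 by simp
  have "(pi s0)^2 \<le> Fh^2" using 2 pi_s0_nonneg by (intro power_mono) auto
  then show "(pi s0)^2 \<le> Dl t * (C2 t / 2)" using 1 by (simp add: c_def)
qed

end


lemma alg_bound:
  fixes y1 y2 Ls h e :: real
  assumes "y1 \<ge> 0" "y2 \<ge> 0" "Ls \<ge> 0" "h \<ge> 0" "e > 0" "Ls^2 \<le> y1 * y2" "y1 + y2 \<le> 2 * Ls + 2 * h"
    "4 * h * (Ls + h) \<le> e^2"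
  shows "y1 \<le> Ls + e"
proof -
  have "y1 * y1 + Ls^2 \<le> y1 * y1 + y1 * y2" using assms(6) by simp
  also have "\<dots> = y1 * (y1 + y2)" by (simp add: algebra_simps)
  also have "\<dots> \<le> y1 * (2 * Ls + 2 * h)" using assms(1,7) by (intro mult_left_mono) auto
  finally have 1: "(y1 - Ls)^2 \<le> 2 * h * y1" by (simp add: power2_eq_square algebra_simps)
  have "y1 \<le> 2 * Ls + 2 * h" using assms(2,7) by simp
  then have "2 * h * y1 \<le> 2 * h * (2 * Ls + 2 * h)" using assms(4) by (intro mult_left_mono) auto
  with 1 have "(y1 - Ls)^2 \<le> e^2" using assms(8) by (simp add: algebra_simps)
  then have "\<bar>y1 - Ls\<bar> \<le> \<bar>e\<bar>" using abs_le_square_iff by blast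
  then show ?thesis using assms(5) by simp
qed

lemma limit_from_bounds:
  fixes f :: "real \<Rightarrow> real"
  assumes "Ls \<ge> 0" and b: "\<forall>k>0. \<exists>T. \<forall>t\<ge>T. f t \<le> Ls + k \<and> Ls^2 \<le> f t * (Ls + k)"
  shows "(f \<longlongrightarrow> Ls) at_top"
proof (rule tendstoI)
  fix e :: real assume e: "e > 0"
  obtain T where T: "\<forall>t\<ge>T. f t \<le> Ls + e/2 \<and> Ls^2 \<le> f t * (Ls + e/2)" using b e by (meson half_gt_zero)
  have "\<forall>t\<ge>T. dist (f t) Ls < e"
  proof (intro allI impI)
    fix t assume "t \<ge> T"
    with T have u: "f t \<le> Ls + e/2" and l: "Ls^2 \<le> f t * (Ls + e/2)" by auto
    have "(Ls - e/2) * (Ls + e/2) \<le> Ls^2" by (simp add: algebra_simps power2_eq_square)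
    with l have "(Ls - e/2) * (Ls + e/2) \<le> f t * (Ls + e/2)" by linarith
    moreover have "Ls + e/2 > 0" using assms(1) e by simp
    ultimately have "Ls - e/2 \<le> f t" by (simp add: mult_le_cancel_right)
    with u e show "dist (f t) Ls < e" by (simp add: dist_real_def abs_less_iff)
  qed
  then show "eventually (\<lambda>t. dist (f t) Ls < e) at_top" by (auto simp: eventually_at_top_linorder)
qed

context phys begin

lemma Dl_comp: assumes "0 \<le> s" "s \<le> t" shows "Dl t \<le> exp (t - s) * Dl s"
proof -
  have "2 * Dl t \<le> (\<Sum>x\<in>A. L (ed x) * (Q s x)^2 / D t (ed x))"
    using thomson[OF _ Q_flow] assms by auto
  also have "\<dots> \<le> (\<Sum>x\<in>A. exp (t - s) * (D s (ed x) * (dp s x)^2 / L (ed x)))"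
  proof (rule sum_mono)
    fix x assume x: "x \<in> A"
    have e: "{fst x, snd x} \<in> E" using x A_iff by (simp add: ed_def)
    have ds: "D s (ed x) > 0" and dt: "D t (ed x) > 0" and lp: "L (ed x) > 0"
      using DpA[OF x] LpA[OF x] assms by auto
    have low: "D t (ed x) \<ge> D s (ed x) * exp (-(t - s))" using Dlow[OF e assms] by (simp add: ed_def)
    have "1 / D t (ed x) \<le> 1 / (D s (ed x) * exp (-(t - s)))"
      using low ds dt by (intro divide_left_mono) (auto intro!: mult_pos_pos)
    also have "\<dots> = exp (t - s) / D s (ed x)" using ds by (simp add: exp_diff field_simps)
    finally have inv: "1 / D t (ed x) \<le> exp (t - s) / D s (ed x)" .
    have "L (ed x) * (Q s x)^2 / D t (ed x) = (L (ed x) * (Q s x)^2) * (1 / D t (ed x))" by simp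
    also have "\<dots> \<le> (L (ed x) * (Q s x)^2) * (exp (t - s) / D s (ed x))"
      using inv lp by (intro mult_left_mono) auto
    also have "\<dots> = exp (t - s) * (D s (ed x) * (dp s x)^2 / L (ed x))"
      using ds lp by (simp add: Q_def power2_eq_square field_simps)
    finally show "L (ed x) * (Q s x)^2 / D t (ed x) \<le> exp (t - s) * (D s (ed x) * (dp s x)^2 / L (ed x))" .
  qed
  also have "\<dots> = exp (t - s) * (2 * Dl s)" using energy[of s] assms by (simp only: sum_distrib_left[symmetric])
  finally show ?thesis by simp
qed

lemma C2_comp: assumes "0 \<le> s" "s \<le> t" shows "C2 s * exp (-(t - s)) \<le> C2 t"
  unfolding C2_def sum_distrib_right
proof (rule sum_mono)
  fix x assume x: "x \<in> A"
  have e: "{fst x, snd x} \<in> E" using x A_iff by (simp add: ed_def)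
  have low: "D t (ed x) \<ge> D s (ed x) * exp (-(t - s))" using Dlow[OF e assms] by (simp add: ed_def)
  then show "L (ed x) * D s (ed x) * exp (- (t - s)) \<le> L (ed x) * D t (ed x)"
    using LpA[OF x] by (simp add: mult.assoc) 
qed

lemma Phi_decr: assumes "0 \<le> a" "a \<le> b" shows "Phi b \<le> Phi a"
proof -
  have "\<forall>\<tau>\<ge>0. ((\<lambda>t. - Phi t) has_real_derivative - Phid \<tau>) (at \<tau> within {0..})"
    using Phi_deriv by (auto intro: DERIV_minus)
  from incr0[OF this _ assms] key_bounds(2) show ?thesis by auto
qed

lemma phi_cauchy: assumes "e > 0" shows "\<exists>T\<ge>0. \<forall>a b. T \<le> a \<longrightarrow> a \<le> b \<longrightarrow> Phi a - Phi b < e"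
proof -
  let ?S = "Phi ` {0..}"
  have bdd: "bdd_below ?S" using Phi_lower by (auto intro!: bdd_belowI)
  have ne: "?S \<noteq> {}" by auto
  have "Inf ?S < Inf ?S + e" using assms by simp
  then obtain y where "y \<in> ?S" "y < Inf ?S + e" using cInf_lessD[OF ne] by blast
  then obtain T where T: "T \<ge> 0" "Phi T < Inf ?S + e" by auto
  have "\<forall>a b. T \<le> a \<longrightarrow> a \<le> b \<longrightarrow> Phi a - Phi b < e"
  proof (intro allI impI)
    fix a b assume ab: "T \<le> a" "a \<le> b"
    have "Phi a \<le> Phi T" using Phi_decr T ab by auto
    moreover have "Inf ?S \<le> Phi b" using bdd ab T by (intro cInf_lower) auto
    ultimately show "Phi a - Phi b < e" using T by linarith
  qed
  with T show ?thesis by blast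
qed

lemma xi: assumes "0 \<le> a" "a < b"
  shows "\<exists>z. a < z \<and> z < b \<and> Dl z + C2 z / 2 \<le> 2 * pi s0 + 2 * ((Phi a - Phi b) / (b - a))"
proof -
  from mvt0[OF _ assms, of Phi Phid] Phi_deriv obtain z where
    z: "a < z" "z < b" "Phi b - Phi a = (b - a) * Phid z" by auto
  have "Phid z \<le> pi s0 - (Dl z + C2 z / 2) / 2" using key_bounds(1) z assms by simp
  moreover have "Phid z = - ((Phi a - Phi b) / (b - a))" using z assms by (simp add: field_simps)
  ultimately have "Dl z + C2 z / 2 \<le> 2 * pi s0 + 2 * ((Phi a - Phi b) / (b - a))" by argo
  with z show ?thesis by blast
qed

end


context phys begin

lemma final_bounds: "\<forall>k>0. \<exists>T. \<forall>t\<ge>T. Dl t \<le> pi s0 + k \<and> (pi s0)^2 \<le> Dl t * (pi s0 + k)"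
proof (intro allI impI)
  fix k :: real assume k: "k > 0"
  define Ls where "Ls = pi s0"
  have Ls0: "Ls \<ge> 0" using pi_s0_nonneg Ls_def by simp
  define th where "th = min 1 (k / (2 + Ls))"
  have th0: "th > 0" using k Ls0 by (simp add: th_def)
  have th1: "th \<le> 1" by (simp add: th_def)
  have th2: "th * (2 + Ls) \<le> k"
  proof -
    have "th \<le> k / (2 + Ls)" by (simp add: th_def)
    then have "th * (2 + Ls) \<le> k / (2 + Ls) * (2 + Ls)" using Ls0 by (intro mult_right_mono) auto
    also have "\<dots> = k" using Ls0 by simp
    finally show ?thesis .
  qed
  have bnd: "(1 + th) * (Ls + th) \<le> Ls + k"
  proof -
    have "(1 + th) * (Ls + th) = Ls + th * (1 + Ls + th)" by (simp add: algebra_simps)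
    also have "th * (1 + Ls + th) \<le> th * (2 + Ls)" using th0 th1 by (intro mult_left_mono) auto
    finally show ?thesis using th2 by linarith
  qed
  define dl where "dl = ln (1 + th)"
  have dl0: "dl > 0" using th0 by (simp add: dl_def)
  have edl: "exp dl = 1 + th" using th0 by (simp add: dl_def)
  define h0 where "h0 = min 1 (th^2 / (4 * (Ls + 1)))"
  have h00: "h0 > 0" using th0 Ls0 by (simp add: h0_def)
  have h0b: "4 * h0 * (Ls + h0) \<le> th^2"
  proof -
    have "4 * h0 * (Ls + h0) \<le> 4 * h0 * (Ls + 1)" using h00 by (intro mult_left_mono) (auto simp: h0_def)
    also have "h0 \<le> th^2 / (4 * (Ls + 1))" by (simp add: h0_def)
    then have "4 * h0 * (Ls + 1) \<le> th^2" using Ls0 by (simp add: field_simps)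
    finally show ?thesis .
  qed
  obtain T where T0: "T \<ge> 0" and T: "\<forall>a b. T \<le> a \<longrightarrow> a \<le> b \<longrightarrow> Phi a - Phi b < dl * h0"
    using phi_cauchy[of "dl * h0"] dl0 h00 by auto
  have hbound: "2 * ((Phi a - Phi (a + dl)) / (a + dl - a)) \<le> 2 * h0" if "a \<ge> T" for a
  proof -
    have "Phi a - Phi (a + dl) < dl * h0" using T that dl0 by auto
    then have "(Phi a - Phi (a + dl)) / dl \<le> h0" using dl0 by (simp add: field_simps)
    then show ?thesis by (simp only: add_diff_cancel_left')
  qed
  have "\<forall>t\<ge>T + dl. Dl t \<le> Ls + k \<and> Ls^2 \<le> Dl t * (Ls + k)"
  proof (intro allI impI)
    fix t assume t: "t \<ge> T + dl"
    obtain z where z: "t - dl < z" "z < t" "Dl z + C2 z / 2 \<le> 2 * pi s0 + 2 * ((Phi (t - dl) - Phi (t - dl + dl)) / (t - dl + dl - (t - dl)))"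
      using xi[of "t - dl" "t - dl + dl"] t T0 dl0 by auto
    have z0: "z \<ge> 0" using z t T0 by linarith
    have "Dl z + C2 z / 2 \<le> 2 * Ls + 2 * h0" using z(3) hbound[of "t - dl"] t Ls_def by linarith
    then have Dz: "Dl z \<le> Ls + th"
      using alg_bound[of "Dl z" "C2 z / 2" Ls h0 th] Dl_nonneg[OF z0] C2_nonneg[OF z0] Ls0 h00 th0
        key_bounds(3)[OF z0] h0b Ls_def by auto
    have "Dl t \<le> exp (t - z) * Dl z" using Dl_comp z0 z by auto
    also have "\<dots> \<le> exp dl * (Ls + th)"
      using Dz Dl_nonneg[OF z0] z by (intro mult_mono) auto
    also have "\<dots> \<le> Ls + k" using edl bnd by simp
    finally have up: "Dl t \<le> Ls + k" .
    have t0: "t \<ge> 0" using t T0 dl0 by linarith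
    obtain w where w: "t < w" "w < t + dl" "Dl w + C2 w / 2 \<le> 2 * pi s0 + 2 * ((Phi t - Phi (t + dl)) / (t + dl - t))"
      using xi[of t "t + dl"] t0 dl0 by auto
    have w0: "w \<ge> 0" using w t0 by linarith
    have "Dl w + C2 w / 2 \<le> 2 * Ls + 2 * h0" using w(3) hbound[of t] t dl0 Ls_def by linarith
    then have Cw: "C2 w / 2 \<le> Ls + th"
      using alg_bound[of "C2 w / 2" "Dl w" Ls h0 th] Dl_nonneg[OF w0] C2_nonneg[OF w0] Ls0 h00 th0
        key_bounds(3)[OF w0] h0b Ls_def by (auto simp: mult.commute)
    have "C2 t * exp (-(w - t)) \<le> C2 w" using C2_comp t0 w by auto
    then have "exp (w - t) * (C2 t * exp (-(w - t))) \<le> exp (w - t) * C2 w" by (intro mult_left_mono) auto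
    moreover have "exp (w - t) * (C2 t * exp (-(w - t))) = C2 t"
    proof -
      have e1: "exp (w - t) * exp (-(w - t)) = 1" by (simp only: exp_add[symmetric]) simp
      have "exp (w - t) * (C2 t * exp (-(w - t))) = C2 t * (exp (w - t) * exp (-(w - t)))" by (simp only: mult_ac)
      also have "\<dots> = C2 t" using e1 by (simp only: mult_1_right)
      finally show ?thesis .
    qed
    ultimately have "C2 t \<le> exp (w - t) * C2 w" by linarith
    also have "\<dots> \<le> exp dl * C2 w" using w C2_nonneg[OF w0] by (intro mult_right_mono) auto
    finally have "C2 t / 2 \<le> exp dl * (C2 w / 2)" by simp
    also have "\<dots> \<le> (1 + th) * (Ls + th)" unfolding edl using Cw th0 by (intro mult_left_mono) auto
    finally have ct: "C2 t / 2 \<le> Ls + k" using bnd by linarith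
    have "Ls^2 \<le> Dl t * (C2 t / 2)" using key_bounds(3)[OF t0] Ls_def by simp
    also have "\<dots> \<le> Dl t * (Ls + k)" using ct Dl_nonneg[OF t0] by (intro mult_left_mono) auto
    finally show "Dl t \<le> Ls + k \<and> Ls^2 \<le> Dl t * (Ls + k)" using up by simp
  qed
  then show "\<exists>T. \<forall>t\<ge>T. Dl t \<le> pi s0 + k \<and> (pi s0)^2 \<le> Dl t * (pi s0 + k)" unfolding Ls_def by blast
qed

lemma main: "((\<lambda>t. p t s0 - p t s1) \<longlongrightarrow> shortest_path_length E L s0 s1) at_top"
proof -
  have "(Dl \<longlongrightarrow> pi s0) at_top" by (rule limit_from_bounds[OF pi_s0_nonneg final_bounds])
  then show ?thesis unfolding Lstar Dl_def .
qed

end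

theorem mainTheorem6:
  fixes N :: "'v set" and E :: "'v set set" and L :: "'v set \<Rightarrow> real"
    and s0 s1 :: 'v
    and D :: "real \<Rightarrow> 'v set \<Rightarrow> real" and p :: "real \<Rightarrow> 'v \<Rightarrow> real"
  assumes "undirected_graph N E" and "connected_graph N E"
    and "s0 \<in> N" and "s1 \<in> N" and "s0 \<noteq> s1"
    and "\<forall>e\<in>E. L e > 0"
    and "physarum_trajectory N E L s0 s1 D p"
  shows "((\<lambda>t. p t s0 - p t s1) \<longlongrightarrow> shortest_path_length E L s0 s1) at_top"
proof -
  interpret phys N E L s0 s1 D p using assms by unfold_locales
  show ?thesis by (rule main)
qed


end
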